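(* Let $n\ge 3$ and $1\le k\le n-1$. Then \[ I_{k-1} \subseteq \bigcap_{1\le i<j\le n-1} P_{ij} \;\cap\; \mathcal J_{K_n} \;\cap\; \bigcap_{t=k}^{n-1}P_{tn}. \]
   Context: Let $\Bbbk$ be a field and $R=\Bbbk[x_1,\dots,x_n,y_1,\dots,y_n]$ the standard graded polynomial ring. For $1\le i<j\le n$ put $f_{ij}=x_iy_j-x_jy_i$ and $g_{ij}=x_ix_j-y_iy_j$. The parity binomial edge ideal of the complete graph $K_n$ is $\mathcal I_{K_n}=(g_{ij}\mid 1\le i<j\le n)$. Let $\mathcal J_{K_n}=\mathcal I_{K_n}:(\prod_{i=1}^n x_iy_i)^\infty=\bigcup_{t\ge1}\mathcal I_{K_n}:(\prod_{i=1}^n x_iy_i)^t$. For $I\subseteq[n]$ let $\mathfrak m_I=(x_i,y_i\mid i\in I)$, and for $1\le i<j\le n$ let $P_{ij}=(g_{ij})+\mathfrak m_{[n]\setminus\{i,j\}}$. Define $I_0=\mathcal I_{K_n}$ and inductively $I_k=I_{k-1}+(f_{kn})$ for $1\le k\le n-1$. *)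

theory Defs
  imports "HOL-Library.Poly_Mapping"
begin

text \<open>Variables x_i (X i) and y_i (Y i); the ring R = k[x_1..x_n,y_1..y_n] is the set
of polynomials (over a field 'k) whose variables have index in {1..n}.\<close>

datatype var = X nat | Y nat

fun vidx :: "var \<Rightarrow> nat" where
  "vidx (X i) = i" | "vidx (Y i) = i"

type_synonym 'k mpoly = "(var \<Rightarrow>\<^sub>0 nat) \<Rightarrow>\<^sub>0 'k"

definition Var :: "var \<Rightarrow> 'k::field mpoly" where
  "Var v = Poly_Mapping.single (Poly_Mapping.single v 1) 1"

abbreviation xv :: "nat \<Rightarrow> 'k::field mpoly" where "xv i \<equiv> Var (X i)"
abbreviation yv :: "nat \<Rightarrow> 'k::field mpoly" where "yv i \<equiv> Var (Y i)"

definition Ring :: "nat \<Rightarrow> 'k::field mpoly set" where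
  "Ring n = {p. \<forall>m \<in> Poly_Mapping.keys p. \<forall>v \<in> Poly_Mapping.keys m. vidx v \<in> {1..n}}"

definition is_ideal :: "'k::field mpoly set \<Rightarrow> 'k mpoly set \<Rightarrow> bool" where
  "is_ideal R I \<longleftrightarrow> I \<subseteq> R \<and> 0 \<in> I \<and> (\<forall>a\<in>I. \<forall>b\<in>I. a + b \<in> I)
     \<and> (\<forall>r\<in>R. \<forall>a\<in>I. r * a \<in> I)"

definition ideal_gen :: "'k::field mpoly set \<Rightarrow> 'k mpoly set \<Rightarrow> 'k mpoly set" where
  "ideal_gen R S = \<Inter>{I. is_ideal R I \<and> S \<subseteq> I}"

definition saturation :: "'k::field mpoly set \<Rightarrow> 'k mpoly set \<Rightarrow> 'k mpoly \<Rightarrow> 'k mpoly set" where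
  "saturation R I f = (\<Union>t\<in>{1..}. {g \<in> R. f ^ t * g \<in> I})"

definition fpol :: "nat \<Rightarrow> nat \<Rightarrow> 'k::field mpoly" where
  "fpol i j = xv i * yv j - xv j * yv i"

definition gpol :: "nat \<Rightarrow> nat \<Rightarrow> 'k::field mpoly" where
  "gpol i j = xv i * xv j - yv i * yv j"

definition parityIK :: "nat \<Rightarrow> 'k::field mpoly set" where
  "parityIK n = ideal_gen (Ring n) {gpol i j | i j. 1 \<le> i \<and> i < j \<and> j \<le> n}"

definition JK :: "nat \<Rightarrow> 'k::field mpoly set" where
  "JK n = saturation (Ring n) (parityIK n) (\<Prod>i\<in>{1..n}. xv i * yv i)"

definition mI :: "nat \<Rightarrow> nat set \<Rightarrow> 'k::field mpoly set" where
  "mI n I = ideal_gen (Ring n) ({xv i | i. i \<in> I} \<union> {yv i | i. i \<in> I})"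

definition Pid :: "nat \<Rightarrow> nat \<Rightarrow> nat \<Rightarrow> 'k::field mpoly set" where
  "Pid n i j = ideal_gen (Ring n) ({gpol i j} \<union> mI n ({1..n} - {i, j}))"

fun Iseq :: "nat \<Rightarrow> nat \<Rightarrow> 'k::field mpoly set" where
  "Iseq n 0 = parityIK n"
| "Iseq n (Suc k) = ideal_gen (Ring n) (Iseq n k \<union> {fpol (Suc k) n})"

end

theory Submission
  imports Defs
begin

lemma Ring_add:
  fixes p q :: "'k::field mpoly"
  shows "p \<in> Ring n \<Longrightarrow> q \<in> Ring n \<Longrightarrow> p + q \<in> Ring n"
  unfolding Ring_def mem_Collect_eq
proof (intro ballI)
  fix m v
  assume p: "\<forall>m\<in>Poly_Mapping.keys p. \<forall>v\<in>Poly_Mapping.keys m. vidx v \<in> {1..n}"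
    and q: "\<forall>m\<in>Poly_Mapping.keys q. \<forall>v\<in>Poly_Mapping.keys m. vidx v \<in> {1..n}"
    and m: "m \<in> Poly_Mapping.keys (p + q)" and v: "v \<in> Poly_Mapping.keys m"
  have "m \<in> Poly_Mapping.keys p \<union> Poly_Mapping.keys q" using m keys_add[of p q] by (rule subsetD[rotated])
  thus "vidx v \<in> {1..n}" using p q v by blast
qed

lemma Ring_uminus: "p \<in> Ring n \<Longrightarrow> - p \<in> Ring n"
  unfolding Ring_def by simp

lemma Ring_diff:
  fixes p q :: "'k::field mpoly"
  shows "p \<in> Ring n \<Longrightarrow> q \<in> Ring n \<Longrightarrow> p - q \<in> Ring n"
  unfolding Ring_def mem_Collect_eq
proof (intro ballI)
  fix m v
  assume p: "\<forall>m\<in>Poly_Mapping.keys p. \<forall>v\<in>Poly_Mapping.keys m. vidx v \<in> {1..n}"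
    and q: "\<forall>m\<in>Poly_Mapping.keys q. \<forall>v\<in>Poly_Mapping.keys m. vidx v \<in> {1..n}"
    and m: "m \<in> Poly_Mapping.keys (p - q)" and v: "v \<in> Poly_Mapping.keys m"
  have "m \<in> Poly_Mapping.keys p \<union> Poly_Mapping.keys q" using m keys_diff[of p q] by (rule subsetD[rotated])
  thus "vidx v \<in> {1..n}" using p q v by blast
qed

lemma Ring_mult:
  fixes p q :: "'k::field mpoly"
  shows "p \<in> Ring n \<Longrightarrow> q \<in> Ring n \<Longrightarrow> p * q \<in> Ring n"
  unfolding Ring_def mem_Collect_eq
proof (intro ballI)
  fix m v
  assume p: "\<forall>m\<in>Poly_Mapping.keys p. \<forall>v\<in>Poly_Mapping.keys m. vidx v \<in> {1..n}"
    and q: "\<forall>m\<in>Poly_Mapping.keys q. \<forall>v\<in>Poly_Mapping.keys m. vidx v \<in> {1..n}"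
    and m: "m \<in> Poly_Mapping.keys (p * q)" and v: "v \<in> Poly_Mapping.keys m"
  have "m \<in> {a + b | a b. a \<in> Poly_Mapping.keys p \<and> b \<in> Poly_Mapping.keys q}" using m keys_mult[of p q] by (rule subsetD[rotated])
  then obtain a b where ab: "m = a + b" "a \<in> Poly_Mapping.keys p" "b \<in> Poly_Mapping.keys q" by blast
  have "v \<in> Poly_Mapping.keys a \<union> Poly_Mapping.keys b" using v keys_add[of a b] ab(1) by blast
  thus "vidx v \<in> {1..n}" using p q ab by blast
qed

lemma Ring_zero: "0 \<in> Ring n" unfolding Ring_def by simp
lemma Ring_one: "1 \<in> Ring n" unfolding Ring_def by simp

lemma Ring_Var: "vidx v \<in> {1..n} \<Longrightarrow> (Var v :: 'k::field mpoly) \<in> Ring n"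
  unfolding Ring_def Var_def by simp

lemma Ring_power: "p \<in> Ring n \<Longrightarrow> p ^ t \<in> Ring n"
  by (induction t) (auto intro: Ring_one Ring_mult)

lemma Ring_prod: "(\<And>i. i \<in> A \<Longrightarrow> f i \<in> Ring n) \<Longrightarrow> prod f A \<in> Ring n"
  by (induction A rule: infinite_finite_induct) (auto intro: Ring_one Ring_mult)

lemma Ring_ideal: "is_ideal (Ring n) (Ring n)"
  unfolding is_ideal_def by (auto intro: Ring_zero Ring_add Ring_mult)

lemma ideal_gen_least: "is_ideal R I \<Longrightarrow> S \<subseteq> I \<Longrightarrow> ideal_gen R S \<subseteq> I"
  unfolding ideal_gen_def by blast

lemma ideal_gen_base: "S \<subseteq> ideal_gen R S"
  unfolding ideal_gen_def by blast

lemma ideal_gen_mem: "x \<in> ideal_gen R S \<longleftrightarrow> (\<forall>I. is_ideal R I \<and> S \<subseteq> I \<longrightarrow> x \<in> I)"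
  unfolding ideal_gen_def by blast

lemma ideal_gen_ideal:
  fixes S :: "'k::field mpoly set"
  assumes "S \<subseteq> Ring n"
  shows "is_ideal (Ring n) (ideal_gen (Ring n) S)"
proof -
  have sub: "ideal_gen (Ring n) S \<subseteq> Ring n" by (rule ideal_gen_least[OF Ring_ideal assms])
  have z: "0 \<in> ideal_gen (Ring n) S"
    unfolding ideal_gen_mem
  proof (intro allI impI)
    fix I :: "'k mpoly set" assume "is_ideal (Ring n) I \<and> S \<subseteq> I"
    thus "0 \<in> I" unfolding is_ideal_def by simp
  qed
  have ad: "\<forall>a\<in>ideal_gen (Ring n) S. \<forall>b\<in>ideal_gen (Ring n) S. a + b \<in> ideal_gen (Ring n) S"
  proof (intro ballI)
    fix a b :: "'k mpoly" assume a: "a \<in> ideal_gen (Ring n) S" and b: "b \<in> ideal_gen (Ring n) S"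
    show "a + b \<in> ideal_gen (Ring n) S"
      unfolding ideal_gen_mem
    proof (intro allI impI)
      fix I :: "'k mpoly set" assume h: "is_ideal (Ring n) I \<and> S \<subseteq> I"
      have "a \<in> I" "b \<in> I" using a b h unfolding ideal_gen_mem by auto
      thus "a + b \<in> I" using h unfolding is_ideal_def by simp
    qed
  qed
  have mu: "\<forall>r\<in>Ring n. \<forall>a\<in>ideal_gen (Ring n) S. r * a \<in> ideal_gen (Ring n) S"
  proof (intro ballI)
    fix r a :: "'k mpoly" assume r: "r \<in> Ring n" and a: "a \<in> ideal_gen (Ring n) S"
    show "r * a \<in> ideal_gen (Ring n) S"
      unfolding ideal_gen_mem
    proof (intro allI impI)
      fix I :: "'k mpoly set" assume h: "is_ideal (Ring n) I \<and> S \<subseteq> I"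
      have "a \<in> I" using a h unfolding ideal_gen_mem by auto
      thus "r * a \<in> I" using h r unfolding is_ideal_def by simp
    qed
  qed
  show ?thesis unfolding is_ideal_def using sub z ad mu by blast
qed

lemma ideal_diff:
  assumes "is_ideal (Ring n) I" "a \<in> I" "b \<in> I"
  shows "a - b \<in> I"
proof -
  have "(-1) \<in> Ring n" using Ring_uminus[OF Ring_one] .
  hence "(-1) * b \<in> I" using assms unfolding is_ideal_def by blast
  hence "a + (-1) * b \<in> I" using assms unfolding is_ideal_def by blast
  thus ?thesis by simp
qed

lemma ideal_mult: "is_ideal (Ring n) I \<Longrightarrow> r \<in> Ring n \<Longrightarrow> a \<in> I \<Longrightarrow> r * a \<in> I"
  unfolding is_ideal_def by blast

lemma ideal_mult2: "is_ideal (Ring n) I \<Longrightarrow> r \<in> Ring n \<Longrightarrow> a \<in> I \<Longrightarrow> a * r \<in> I"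
  unfolding is_ideal_def by (metis mult.commute)

lemma xv_R: "1 \<le> i \<Longrightarrow> i \<le> n \<Longrightarrow> (xv i :: 'k::field mpoly) \<in> Ring n"
  by (rule Ring_Var) simp
lemma yv_R: "1 \<le> i \<Longrightarrow> i \<le> n \<Longrightarrow> (yv i :: 'k::field mpoly) \<in> Ring n"
  by (rule Ring_Var) simp

lemma gpol_R: "1 \<le> i \<Longrightarrow> i \<le> n \<Longrightarrow> 1 \<le> j \<Longrightarrow> j \<le> n \<Longrightarrow> (gpol i j :: 'k::field mpoly) \<in> Ring n"
  unfolding gpol_def by (intro Ring_diff Ring_mult xv_R yv_R)

lemma fpol_R: "1 \<le> i \<Longrightarrow> i \<le> n \<Longrightarrow> 1 \<le> j \<Longrightarrow> j \<le> n \<Longrightarrow> (fpol i j :: 'k::field mpoly) \<in> Ring n"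
  unfolding fpol_def by (intro Ring_diff Ring_mult xv_R yv_R)

lemma var_ideal_polys:
  assumes I: "is_ideal (Ring n) I" and xi: "(xv i :: 'k::field mpoly) \<in> I" and yi: "yv i \<in> I"
    and j: "1 \<le> j" "j \<le> n"
  shows "gpol i j \<in> I" "gpol j i \<in> I" "fpol i j \<in> I" "fpol j i \<in> I"
proof -
  have xj: "(xv j :: 'k mpoly) \<in> Ring n" and yj: "(yv j :: 'k mpoly) \<in> Ring n"
    using j by (auto intro: xv_R yv_R)
  have a: "xv i * xv j \<in> I" "yv i * yv j \<in> I" "xv i * yv j \<in> I" "yv i * xv j \<in> I"
    using ideal_mult2[OF I] xi yi xj yj by blast+
  have b: "xv j * xv i \<in> I" "yv j * yv i \<in> I" "xv j * yv i \<in> I" "yv j * xv i \<in> I"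
    using a by (simp_all add: mult.commute)
  show "gpol i j \<in> I" "gpol j i \<in> I" "fpol i j \<in> I" "fpol j i \<in> I"
    unfolding gpol_def fpol_def using ideal_diff[OF I] a b by (auto simp: mult.commute)
qed

lemma Iseq_sub:
  assumes I: "is_ideal (Ring n) I"
    and g: "\<And>i j. 1 \<le> i \<Longrightarrow> i < j \<Longrightarrow> j \<le> n \<Longrightarrow> gpol i j \<in> I"
    and f: "\<And>s. 1 \<le> s \<Longrightarrow> s \<le> m \<Longrightarrow> fpol s n \<in> I"
  shows "(Iseq n m :: 'k::field mpoly set) \<subseteq> I"
  using f
proof (induction m)
  case 0
  show ?case unfolding Iseq.simps parityIK_def
    by (rule ideal_gen_least[OF I]) (auto intro: g)
next
  case (Suc m)
  have "Iseq n m \<subseteq> I" using Suc.IH Suc.prems by simp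
  moreover have "fpol (Suc m) n \<in> I" using Suc.prems by simp
  ultimately show ?case unfolding Iseq.simps by (intro ideal_gen_least[OF I]) auto
qed

lemma mI_ideal: "is_ideal (Ring n) (mI n A :: 'k::field mpoly set)" if "A \<subseteq> {1..n}"
  unfolding mI_def using that by (intro ideal_gen_ideal) (auto intro!: Ring_Var)

lemma Pid_ideal:
  assumes "1 \<le> i" "i \<le> n" "1 \<le> j" "j \<le> n"
  shows "is_ideal (Ring n) (Pid n i j :: 'k::field mpoly set)"
proof -
  have "mI n ({1..n} - {i, j}) \<subseteq> (Ring n :: 'k mpoly set)"
    using mI_ideal[of "{1..n} - {i,j}" n] unfolding is_ideal_def by auto
  thus ?thesis unfolding Pid_def using assms by (intro ideal_gen_ideal) (auto intro: gpol_R)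
qed

lemma Pid_var:
  assumes "1 \<le> l" "l \<le> n" "l \<noteq> i" "l \<noteq> j"
  shows "(xv l :: 'k::field mpoly) \<in> Pid n i j" "(yv l :: 'k::field mpoly) \<in> Pid n i j"
proof -
  have "xv l \<in> (mI n ({1..n} - {i, j}) :: 'k mpoly set)" "yv l \<in> (mI n ({1..n} - {i, j}) :: 'k mpoly set)"
    unfolding mI_def using assms by (auto intro!: ideal_gen_base[THEN subsetD])
  thus "(xv l :: 'k::field mpoly) \<in> Pid n i j" "(yv l :: 'k::field mpoly) \<in> Pid n i j"
    unfolding Pid_def by (auto intro!: ideal_gen_base[THEN subsetD])
qed

lemma Pid_g: "(gpol i j :: 'k::field mpoly) \<in> Pid n i j"
  unfolding Pid_def by (auto intro!: ideal_gen_base[THEN subsetD])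

lemma Pid_contains:
  assumes ij: "1 \<le> a" "a < b" "b \<le> n"
    and f: "\<And>s. 1 \<le> s \<Longrightarrow> s \<le> m \<Longrightarrow> s \<noteq> a \<and> s \<noteq> b \<or> n \<noteq> a \<and> n \<noteq> b"
    and m: "m < n"
  shows "(Iseq n m :: 'k::field mpoly set) \<subseteq> Pid n a b"
proof (rule Iseq_sub)
  show I: "is_ideal (Ring n) (Pid n a b :: 'k mpoly set)" using ij by (intro Pid_ideal) auto
  fix i j :: nat assume h: "1 \<le> i" "i < j" "j \<le> n"
  show "gpol i j \<in> (Pid n a b :: 'k mpoly set)"
  proof (cases "i = a \<and> j = b")
    case True thus ?thesis using Pid_g by blast
  next
    case False
    hence "(i \<noteq> a \<and> i \<noteq> b) \<or> (j \<noteq> a \<and> j \<noteq> b)" using h ij by auto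
    thus ?thesis
    proof
      assume "i \<noteq> a \<and> i \<noteq> b"
      thus ?thesis using var_ideal_polys(1)[OF I Pid_var(1) Pid_var(2), of i j] h by auto
    next
      assume "j \<noteq> a \<and> j \<noteq> b"
      thus ?thesis using var_ideal_polys(2)[OF I Pid_var(1) Pid_var(2), of j i] h by auto
    qed
  qed
next
  fix s assume s: "1 \<le> s" "s \<le> m"
  have I: "is_ideal (Ring n) (Pid n a b :: 'k mpoly set)" using ij by (intro Pid_ideal) auto
  from f[OF s] show "fpol s n \<in> (Pid n a b :: 'k mpoly set)"
  proof
    assume "s \<noteq> a \<and> s \<noteq> b"
    thus ?thesis using var_ideal_polys(3)[OF I Pid_var(1) Pid_var(2), of s n] s m by auto
  next
    assume "n \<noteq> a \<and> n \<noteq> b"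
    thus ?thesis using var_ideal_polys(4)[OF I Pid_var(1) Pid_var(2), of n s] s m by auto
  qed
qed

lemma gpol_sym: "gpol i j = gpol j i"
  by (simp add: gpol_def mult.commute)

lemma parity_ideal: "is_ideal (Ring n) (parityIK n :: 'k::field mpoly set)"
  unfolding parityIK_def by (intro ideal_gen_ideal) (auto intro: gpol_R)

lemma gpol_parity:
  assumes "1 \<le> i" "i \<le> n" "1 \<le> j" "j \<le> n" "i \<noteq> j"
  shows "(gpol i j :: 'k::field mpoly) \<in> parityIK n"
proof (cases "i < j")
  case True
  thus ?thesis unfolding parityIK_def using assms by (auto intro!: ideal_gen_base[THEN subsetD])
next
  case False
  hence "j < i" using assms by simp
  thus ?thesis unfolding parityIK_def using assms
    by (subst gpol_sym) (auto intro!: ideal_gen_base[THEN subsetD])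
qed

lemma sat_memI: "1 \<le> t \<Longrightarrow> g \<in> R \<Longrightarrow> f ^ t * g \<in> I \<Longrightarrow> g \<in> saturation R I f"
  unfolding saturation_def by blast

lemma sat_ideal:
  assumes I: "is_ideal (Ring n) I" and f: "f \<in> Ring n"
  shows "is_ideal (Ring n) (saturation (Ring n) I f)"
proof -
  have sub: "saturation (Ring n) I f \<subseteq> Ring n" unfolding saturation_def by blast
  have z: "0 \<in> saturation (Ring n) I f"
    using I Ring_zero unfolding is_ideal_def by (intro sat_memI[of 1]) auto
  have ad: "a + b \<in> saturation (Ring n) I f"
    if a: "a \<in> saturation (Ring n) I f" and b: "b \<in> saturation (Ring n) I f" for a b
  proof -
    obtain t where t: "t \<ge> 1" "a \<in> Ring n" "f ^ t * a \<in> I" using a unfolding saturation_def by auto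
    obtain u where u: "u \<ge> 1" "b \<in> Ring n" "f ^ u * b \<in> I" using b unfolding saturation_def by auto
    have "f ^ u * (f ^ t * a) \<in> I" "f ^ t * (f ^ u * b) \<in> I"
      using ideal_mult[OF I Ring_power[OF f]] t u by blast+
    hence "f ^ u * (f ^ t * a) + f ^ t * (f ^ u * b) \<in> I" using I unfolding is_ideal_def by blast
    moreover have "f ^ u * (f ^ t * a) + f ^ t * (f ^ u * b) = f ^ (t + u) * (a + b)"
      by (simp add: power_add algebra_simps)
    ultimately have "f ^ (t + u) * (a + b) \<in> I" by simp
    moreover have "a + b \<in> Ring n" using t u Ring_add by blast
    ultimately show ?thesis using t by (intro sat_memI[of "t + u"]) auto
  qed
  have mu: "r * a \<in> saturation (Ring n) I f"
    if r: "r \<in> Ring n" and a: "a \<in> saturation (Ring n) I f" for r a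
  proof -
    obtain t where t: "t \<ge> 1" "a \<in> Ring n" "f ^ t * a \<in> I" using a unfolding saturation_def by auto
    have "r * (f ^ t * a) \<in> I" using ideal_mult[OF I r] t by blast
    hence "f ^ t * (r * a) \<in> I" by (simp add: ac_simps)
    moreover have "r * a \<in> Ring n" using r t Ring_mult by blast
    ultimately show ?thesis using t by (intro sat_memI[of t]) auto
  qed
  show ?thesis unfolding is_ideal_def using sub z ad mu by blast
qed

lemma prodxy_R: "(\<Prod>i\<in>{1..n}. xv i * yv i :: 'k::field mpoly) \<in> Ring n"
  by (rule Ring_prod) (auto intro!: Ring_mult Ring_Var)

lemma JK_ideal: "is_ideal (Ring n) (JK n :: 'k::field mpoly set)"
  unfolding JK_def by (intro sat_ideal parity_ideal prodxy_R)

lemma parity_JK: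
  assumes p: "(p :: 'k::field mpoly) \<in> parityIK n"
  shows "p \<in> JK n"
proof -
  have "p \<in> Ring n" using p parity_ideal unfolding is_ideal_def by blast
  moreover have "(\<Prod>i\<in>{1..n}. xv i * yv i) ^ 1 * p \<in> parityIK n"
    using ideal_mult[OF parity_ideal prodxy_R p] by simp
  ultimately show ?thesis unfolding JK_def by (intro sat_memI[of 1]) auto
qed

lemma f_JK:
  assumes n: "n \<ge> 3" and s: "1 \<le> s" "s < n"
  shows "(fpol s n :: 'k::field mpoly) \<in> JK n"
proof -
  define l where "l = (if s = 1 then 2 else (1::nat))"
  have l: "1 \<le> l" "l \<le> n" "l \<noteq> s" "l \<noteq> n" using n s unfolding l_def by auto
  have key: "(xv l :: 'k mpoly) * fpol s n = yv n * gpol s l - yv s * gpol n l"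
    unfolding fpol_def gpol_def by (simp add: algebra_simps)
  have g1: "(gpol s l :: 'k mpoly) \<in> parityIK n" using l s by (intro gpol_parity) auto
  have g2: "(gpol n l :: 'k mpoly) \<in> parityIK n" using l s n by (intro gpol_parity) auto
  have "(xv l :: 'k mpoly) * fpol s n \<in> parityIK n"
    unfolding key using s n
    by (intro ideal_diff[OF parity_ideal] ideal_mult[OF parity_ideal] g1 g2 yv_R) auto
  note xf = this
  have Qr: "(yv l * (\<Prod>i\<in>{1..n} - {l}. xv i * yv i) :: 'k mpoly) \<in> Ring n"
    using l by (intro Ring_mult Ring_prod) (auto intro!: Ring_mult Ring_Var)
  have h: "(yv l * (\<Prod>i\<in>{1..n} - {l}. xv i * yv i)) * ((xv l :: 'k mpoly) * fpol s n) \<in> parityIK n"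
    by (rule ideal_mult[OF parity_ideal Qr xf])
  have "(\<Prod>i\<in>{1..n}. xv i * yv i :: 'k mpoly) = (xv l * yv l) * (\<Prod>i\<in>{1..n} - {l}. xv i * yv i)"
    using l by (subst prod.remove[of _ l]) auto
  hence eq: "(\<Prod>i\<in>{1..n}. xv i * yv i :: 'k mpoly) ^ 1 * fpol s n
      = (yv l * (\<Prod>i\<in>{1..n} - {l}. xv i * yv i)) * ((xv l :: 'k mpoly) * fpol s n)"
    by (simp only: power_one_right ac_simps)
  have "(\<Prod>i\<in>{1..n}. xv i * yv i :: 'k mpoly) ^ 1 * fpol s n \<in> parityIK n"
    unfolding eq by (rule h)
  moreover have "(fpol s n :: 'k mpoly) \<in> Ring n" using s by (intro fpol_R) auto
  ultimately show ?thesis unfolding JK_def by (intro sat_memI[of 1]) auto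
qed

theorem lemma3p2:
  fixes n k :: nat
  assumes "n \<ge> 3" and "1 \<le> k" and "k \<le> n - 1"
  shows "(Iseq n (k - 1) :: 'k::field mpoly set) \<subseteq>
    (\<Inter>{Pid n i j | i j. 1 \<le> i \<and> i < j \<and> j \<le> n - 1}) \<inter> JK n
      \<inter> (\<Inter>t\<in>{k..n-1}. Pid n t n)"
proof (intro subsetI IntI)
  fix p :: "'k mpoly" assume p: "p \<in> Iseq n (k - 1)"
  show "p \<in> \<Inter>{Pid n i j | i j. 1 \<le> i \<and> i < j \<and> j \<le> n - 1}"
  proof (rule InterI)
    fix P :: "'k mpoly set" assume "P \<in> {Pid n i j | i j. 1 \<le> i \<and> i < j \<and> j \<le> n - 1}"
    then obtain i j where ij: "P = Pid n i j" "1 \<le> i" "i < j" "j \<le> n - 1" by blast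
    have "(Iseq n (k - 1) :: 'k mpoly set) \<subseteq> Pid n i j"
      using ij assms by (intro Pid_contains) auto
    thus "p \<in> P" using p ij by blast
  qed
  have "(Iseq n (k - 1) :: 'k mpoly set) \<subseteq> JK n"
  proof (rule Iseq_sub[OF JK_ideal])
    fix i j :: nat assume "1 \<le> i" "i < j" "j \<le> n"
    thus "gpol i j \<in> (JK n :: 'k mpoly set)" by (intro parity_JK gpol_parity) auto
  next
    fix s assume "1 \<le> s" "s \<le> k - 1"
    thus "fpol s n \<in> (JK n :: 'k mpoly set)" using assms by (intro f_JK) auto
  qed
  thus "p \<in> JK n" using p by blast
  show "p \<in> (\<Inter>t\<in>{k..n-1}. Pid n t n)"
  proof (rule INT_I)
    fix t assume t: "t \<in> {k..n-1}"
    have "(Iseq n (k - 1) :: 'k mpoly set) \<subseteq> Pid n t n"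
      using t assms by (intro Pid_contains) auto
    thus "p \<in> Pid n t n" using p by blast
  qed
qed

end
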